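(* There exist an open interval $(\theta^-,\theta^+)$ containing $0$ and a unique continuously differentiable function $\gamma:(\theta^-,\theta^+)\to\mathbb{R}$ with $\gamma(0)=0$ such that $f_{\mathrm{comp}}(\gamma(\theta),\theta)=0$ and $\mathbf{f}_{\mathrm{mv}}(\gamma(\theta),\theta)>\mathbf{0}$ (componentwise) for all $\theta\in(\theta^-,\theta^+)$. Moreover $\gamma$ is analytic and $$\gamma'(\theta)=\frac{|\mathbf{t}_1^r|}{|\mathbf{t}_4^r|}\,\frac{\mathbf{t}_2^d(\gamma(\theta))\cdot(\mathbf{t}_3^d(\theta)\times\mathbf{t}_4^r)}{\mathbf{t}_1^r\cdot(\mathbf{t}_2^d(\gamma(\theta))\times\mathbf{t}_3^d(\theta))}.$$
   Context: Fix $\mathbf{t}_1^r,\dots,\mathbf{t}_4^r\in\mathbb{R}^3$ with $\mathbf{t}_i^r\cdot(\mathbf{t}_j^r\times\mathbf{t}_k^r)\neq0$ for $ijk\in\{123,234,341,412\}$. For nonzero $\mathbf{t}\in\mathbb{R}^3$ and $\varphi\in\mathbb{R}$ let $\mathbf{R}_{\mathbf{t}}(\varphi):=|\mathbf{t}|^{-2}\mathbf{t}\otimes\mathbf{t}+\cos\varphi(\mathbf{I}-|\mathbf{t}|^{-2}\mathbf{t}\otimes\mathbf{t})+|\mathbf{t}|^{-1}\sin\varphi(\mathbf{t}\times)$ (counterclockwise rotation about $\mathbf{t}$ by $\varphi$), where $(\mathbf{a}\times)\mathbf{b}=\mathbf{a}\times\mathbf{b}$. Set $\mathbf{t}_1^d:=\mathbf{t}_1^r$,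 $\mathbf{t}_4^d:=\mathbf{t}_4^r$, $\mathbf{t}_2^d(\gamma):=\mathbf{R}_{\mathbf{t}_1^r}(\gamma)\mathbf{t}_2^r$, $\mathbf{t}_3^d(\theta):=\mathbf{R}_{\mathbf{t}_4^r}(\theta)\mathbf{t}_3^r$. Define $f_{\mathrm{comp}}(\gamma,\theta):=\mathbf{t}_2^d(\gamma)\cdot\mathbf{t}_3^d(\theta)-\mathbf{t}_2^r\cdot\mathbf{t}_3^r$ and $\mathbf{f}_{\mathrm{mv}}(\gamma,\theta)\in\mathbb{R}^4$ with components $[\mathbf{t}_1^d\cdot(\mathbf{t}_2^d(\gamma)\times\mathbf{t}_3^d(\theta))][\mathbf{t}_1^r\cdot(\mathbf{t}_2^r\times\mathbf{t}_3^r)]$, $[\mathbf{t}_2^d(\gamma)\cdot(\mathbf{t}_3^d(\theta)\times\mathbf{t}_4^d)][\mathbf{t}_2^r\cdot(\mathbf{t}_3^r\times\mathbf{t}_4^r)]$, $[\mathbf{t}_3^d(\theta)\cdot(\mathbf{t}_4^d\times\mathbf{t}_1^d)][\mathbf{t}_3^r\cdot(\mathbf{t}_4^r\times\mathbf{t}_1^r)]$, $[\mathbf{t}_4^d\cdot(\mathbf{t}_1^d\times\mathbf{t}_2^d(\gamma))][\mathbf{t}_4^r\cdot(\mathbf{t}_1^r\times\mathbf{t}_2^r)]$. *)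

theory Defs
  imports "HOL-Analysis.Analysis"
begin

definition triple :: "real^3 \<Rightarrow> real^3 \<Rightarrow> real^3 \<Rightarrow> real" where
  "triple a b c = a \<bullet> cross3 b c"

text \<open>R_t(phi) applied to v: counterclockwise rotation of v about t by phi,
  i.e. (|t|^-2 t(x)t + cos phi (I - |t|^-2 t(x)t) + |t|^-1 sin phi (t x)) v.\<close>
definition rot :: "real^3 \<Rightarrow> real \<Rightarrow> real^3 \<Rightarrow> real^3" where
  "rot t \<phi> v = ((t \<bullet> v) / (norm t)\<^sup>2) *\<^sub>R t
      + cos \<phi> *\<^sub>R (v - ((t \<bullet> v) / (norm t)\<^sup>2) *\<^sub>R t)
      + (sin \<phi> / norm t) *\<^sub>R cross3 t v"

definition t2d :: "real^3 \<Rightarrow> real^3 \<Rightarrow> real \<Rightarrow> real^3" where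
  "t2d t1 t2 \<gamma> = rot t1 \<gamma> t2"

definition t3d :: "real^3 \<Rightarrow> real^3 \<Rightarrow> real \<Rightarrow> real^3" where
  "t3d t4 t3 \<theta> = rot t4 \<theta> t3"

definition f_comp :: "real^3 \<Rightarrow> real^3 \<Rightarrow> real^3 \<Rightarrow> real^3 \<Rightarrow> real \<Rightarrow> real \<Rightarrow> real" where
  "f_comp t1 t2 t3 t4 \<gamma> \<theta> = t2d t1 t2 \<gamma> \<bullet> t3d t4 t3 \<theta> - t2 \<bullet> t3"

text \<open>The four components of f_mv, indexed 1..4 (as i = 0..3).\<close>
definition f_mv :: "real^3 \<Rightarrow> real^3 \<Rightarrow> real^3 \<Rightarrow> real^3 \<Rightarrow> real \<Rightarrow> real \<Rightarrow> nat \<Rightarrow> real" where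
  "f_mv t1 t2 t3 t4 \<gamma> \<theta> i =
     (let d1 = t1; d2 = t2d t1 t2 \<gamma>; d3 = t3d t4 t3 \<theta>; d4 = t4 in
      if i = 0 then triple d1 d2 d3 * triple t1 t2 t3
      else if i = 1 then triple d2 d3 d4 * triple t2 t3 t4
      else if i = 2 then triple d3 d4 d1 * triple t3 t4 t1
      else triple d4 d1 d2 * triple t4 t1 t2)"

definition real_analytic_on :: "(real \<Rightarrow> real) \<Rightarrow> real set \<Rightarrow> bool" where
  "real_analytic_on f S \<longleftrightarrow>
     (\<forall>x\<in>S. \<exists>r>0. \<exists>c::nat \<Rightarrow> real. \<forall>y. \<bar>y - x\<bar> < r \<longrightarrow> (\<lambda>n. c n * (y - x) ^ n) sums f y)"

end

theory Submission
  imports Defs "HOL-Complex_Analysis.Complex_Analysis"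
begin


lemma cos_sin_2arctan:
  fixes t :: real
  shows "cos (2 * arctan t) = (1 - t^2) / (1 + t^2)" "sin (2 * arctan t) = 2 * t / (1 + t^2)"
proof -
  have p: "0 < 1 + t^2" by (simp add: add_pos_nonneg)
  have sq: "(sqrt (1 + t^2))^2 = 1 + t^2" using p by simp
  show "cos (2 * arctan t) = (1 - t^2) / (1 + t^2)"
    unfolding cos_double cos_arctan sin_arctan using p sq
    by (simp add: power_divide field_simps)
  show "sin (2 * arctan t) = 2 * t / (1 + t^2)"
    unfolding sin_double cos_arctan sin_arctan using p sq
    by (simp add: power_divide field_simps power2_eq_square)
qed

lemma core:
  fixes a b c s :: real
  assumes s: "s = 1 \<or> s = -1" and sb: "s * b > 0" and pos: "a^2+b^2-c^2 > 0"
  defines "g \<equiv> s * 2 * arctan ((c - a)/(s * b + sqrt(a^2+b^2-c^2)))"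
  shows "a * cos g + b * sin g = c" and "s * (b * cos g - a * sin g) = sqrt(a^2+b^2-c^2)"
proof -
  define D where "D = sqrt(a^2+b^2-c^2)"
  define B where "B = s * b"
  have ss: "s * s = 1" using s by auto
  have bB: "b = s * B" unfolding B_def using ss by (simp add: mult.assoc[symmetric])
  have D2: "D^2 = a^2+B^2-c^2" unfolding D_def B_def using pos s by auto
  have Dpos: "D > 0" unfolding D_def using pos by simp
  define q where "q = B + D"
  have q: "q > 0" unfolding q_def B_def using sb Dpos by simp
  define t where "t = (c - a)/q"
  have cg: "cos g = (1 - t^2) / (1 + t^2)" and sg: "sin g = s * (2 * t / (1 + t^2))"
  proof -
    have g': "g = s * (2 * arctan t)" by (simp add: g_def t_def q_def B_def D_def)
    show "cos g = (1 - t^2) / (1 + t^2)" using s unfolding g'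
      by (auto simp: cos_sin_2arctan(1)[symmetric])
    show "sin g = s * (2 * t / (1 + t^2))" using s unfolding g'
      by (auto simp: cos_sin_2arctan(2)[symmetric])
  qed
  have p: "0 < 1 + t^2" by (simp add: add_pos_nonneg)
  have e1: "a * (q^2 - (c-a)^2) + 2 * B * (c-a) * q = c * (q^2 + (c-a)^2)"
    unfolding q_def using D2 by algebra
  have e2: "B * (q^2 - (c-a)^2) - 2 * a * (c-a) * q = D * (q^2 + (c-a)^2)"
    unfolding q_def using D2 by algebra
  have bs: "b * sin g = (s * s) * (B * (2 * t / (1 + t^2)))" unfolding bB sg by (simp add: algebra_simps)
  have bs': "s * b = B" by (simp add: B_def)
  have ss': "s * sin g = (s * s) * (2 * t / (1 + t^2))" unfolding sg by (simp add: algebra_simps)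
  have "a * cos g + b * sin g = (a * (1 - t^2) + 2 * B * t) / (1 + t^2)"
    unfolding bs ss cg using p by (simp add: add_divide_distrib)
  also have "\<dots> = c"
  proof -
    have l: "(a * (1 - t^2) + 2 * B * t) * q^2 = a * (q^2 - (c-a)^2) + 2 * B * (c-a) * q"
      unfolding t_def using q by (simp add: field_simps power2_eq_square)
    have r: "(c * (1 + t^2)) * q^2 = c * (q^2 + (c-a)^2)"
      unfolding t_def using q by (simp add: field_simps power2_eq_square)
    have "a * (1 - t^2) + 2 * B * t = c * (1 + t^2)"
      using l r e1 q by (metis mult_right_cancel power_not_zero less_irrefl)
    then show ?thesis using p by (simp add: divide_eq_eq)
  qed
  finally show "a * cos g + b * sin g = c" .
  have "s * (b * cos g - a * sin g) = (s * b) * cos g - a * (s * sin g)" by (simp add: algebra_simps)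
  also have "\<dots> = (B * (1 - t^2) - 2 * a * t) / (1 + t^2)"
  proof -
    have p0: "1 + t^2 \<noteq> 0" using p by simp
    show ?thesis unfolding bs' ss' ss cg mult_1
      by (simp only: times_divide_eq_right diff_divide_distrib) (use p0 in \<open>simp add: field_simps\<close>)
  qed
  finally have "s * (b * cos g - a * sin g) = (B * (1 - t^2) - 2 * a * t) / (1 + t^2)" .
  also have "\<dots> = D"
  proof -
    have l: "(B * (1 - t^2) - 2 * a * t) * q^2 = B * (q^2 - (c-a)^2) - 2 * a * (c-a) * q"
      unfolding t_def using q by (simp add: field_simps power2_eq_square)
    have r: "(D * (1 + t^2)) * q^2 = D * (q^2 + (c-a)^2)"
      unfolding t_def using q by (simp add: field_simps power2_eq_square)
    have "B * (1 - t^2) - 2 * a * t = D * (1 + t^2)"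
      using l r e2 q by (metis mult_right_cancel power_not_zero less_irrefl)
    then show ?thesis using p by (simp add: divide_eq_eq)
  qed
  finally show "s * (b * cos g - a * sin g) = sqrt(a^2+b^2-c^2)" unfolding D_def .
qed

lemma core_unique:
  fixes a b c s x y :: real
  assumes s: "s = 1 \<or> s = -1" and pos: "a^2+b^2-c^2 > 0"
    and x1: "a * cos x + b * sin x = c" and x2: "s * (b * cos x - a * sin x) > 0"
    and y1: "a * cos y + b * sin y = c" and y2: "s * (b * cos y - a * sin y) > 0"
  shows "\<exists>n::int. x = y + 2 * pi * n"
proof -
  have key: "s * (b * cos z - a * sin z) = sqrt(a^2+b^2-c^2)"
    if z1: "a * cos z + b * sin z = c" and z2: "s * (b * cos z - a * sin z) > 0" for z
  proof -
    have "(s * (b * cos z - a * sin z))^2 = a^2+b^2-c^2"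
    proof -
      have "(s * (b * cos z - a * sin z))^2 = (b * cos z - a * sin z)^2"
        using s by (auto simp: power_mult_distrib)
      moreover have "(b * cos z - a * sin z)^2 + (a * cos z + b * sin z)^2 = (a^2+b^2) * ((sin z)^2 + (cos z)^2)"
        by algebra
      ultimately have "(s * (b * cos z - a * sin z))^2 + (a * cos z + b * sin z)^2 = (a^2+b^2) * ((sin z)^2 + (cos z)^2)"
        by simp
      then show ?thesis using z1 by simp
    qed
    then show ?thesis using z2 by (metis abs_of_pos real_sqrt_abs)
  qed
  have ab: "a^2 + b^2 > 0" using pos by (smt (verit) zero_le_power2)
  have sol: "cos z = (a * c + b * s * sqrt(a^2+b^2-c^2)) / (a^2+b^2) \<and> sin z = (b * c - a * s * sqrt(a^2+b^2-c^2)) / (a^2+b^2)"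
    if z1: "a * cos z + b * sin z = c" and z2: "s * (b * cos z - a * sin z) > 0" for z
  proof -
    have k: "s * (b * cos z - a * sin z) = sqrt(a^2+b^2-c^2)" using key z1 z2 by blast
    have ss: "s * s = 1" using s by auto
    have e: "b * cos z - a * sin z = s * sqrt(a^2+b^2-c^2)"
      using k ss by (metis mult.assoc mult_1)
    have i1: "(a^2+b^2) * cos z = a * (a * cos z + b * sin z) + b * (b * cos z - a * sin z)"
      by (simp add: algebra_simps power2_eq_square)
    have i2: "(a^2+b^2) * sin z = b * (a * cos z + b * sin z) - a * (b * cos z - a * sin z)"
      by (simp add: algebra_simps power2_eq_square)
    have "(a^2+b^2) * cos z = a * c + b * s * sqrt(a^2+b^2-c^2)"
      unfolding i1 z1 e by (simp add: algebra_simps)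
    moreover have "(a^2+b^2) * sin z = b * c - a * s * sqrt(a^2+b^2-c^2)"
      unfolding i2 z1 e by (simp add: algebra_simps)
    moreover have "a^2+b^2 \<noteq> 0" using ab by linarith
    moreover have nz: "\<not>(a = 0 \<and> b = 0)"
    proof
      assume "a = 0 \<and> b = 0" with ab show False by simp
    qed
    ultimately show ?thesis by (metis nonzero_mult_div_cancel_left)
  qed
  have "sin x = sin y \<and> cos x = cos y" using sol[OF x1 x2] sol[OF y1 y2] by simp
  then show ?thesis using sin_cos_eq_iff by blast
qed


lemma rot_decomp:
  "rot t \<phi> v = ((t \<bullet> v) / (norm t)\<^sup>2) *\<^sub>R t + cos \<phi> *\<^sub>R (v - ((t \<bullet> v) / (norm t)\<^sup>2) *\<^sub>R t)
     + sin \<phi> *\<^sub>R ((1 / norm t) *\<^sub>R cross3 t v)"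
  unfolding rot_def by simp

lemma rot_0: "rot t 0 v = v"
  unfolding rot_def by simp

lemma cross_rot:
  assumes "t \<noteq> 0"
  shows "cross3 t (rot t \<phi> v) = norm t *\<^sub>R (cos \<phi> *\<^sub>R ((1 / norm t) *\<^sub>R cross3 t v)
            - sin \<phi> *\<^sub>R (v - ((t \<bullet> v) / (norm t)\<^sup>2) *\<^sub>R t))"
proof -
  have n: "norm t \<noteq> 0" using assms by simp
  have tt: "t \<bullet> t = (norm t)\<^sup>2" by (simp add: power2_norm_eq_inner)
  have L: "cross3 t (cross3 t v) = (t \<bullet> v) *\<^sub>R t - (t \<bullet> t) *\<^sub>R v"
    using Lagrange[of t t v] by simp
  have "cross3 t (rot t \<phi> v) = cos \<phi> *\<^sub>R cross3 t v + (sin \<phi> / norm t) *\<^sub>R cross3 t (cross3 t v)"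
    unfolding rot_def by (simp add: cross_add_right cross_mult_right Cross3.right_diff_distrib)
  also have "\<dots> = norm t *\<^sub>R (cos \<phi> *\<^sub>R ((1 / norm t) *\<^sub>R cross3 t v)
            - sin \<phi> *\<^sub>R (v - ((t \<bullet> v) / (norm t)\<^sup>2) *\<^sub>R t))"
    unfolding L tt using n by (simp add: algebra_simps power2_eq_square)
  finally show ?thesis .
qed

lemma triple_cyc: "triple a b c = inner (cross3 a b) c"
  unfolding triple_def using cross_triple[of a b c] by (simp add: inner_commute)



lemma open_Im_lt1: "open {z::complex. \<bar>Im z\<bar> < 1}"
  by (intro open_Collect_less continuous_intros)

lemma analytic_Arctan_strip: "Arctan analytic_on {z::complex. \<bar>Im z\<bar> < 1}"
  by (subst analytic_on_open[OF open_Im_lt1]) (auto intro!: holomorphic_on_Arctan)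

lemma analytic_gamma:
  fixes a0 a1 a2 b0 b1 b2 c0 c1 c2 s :: real and S :: "real set"
  defines "a \<equiv> \<lambda>\<theta>. a0 + a1 * cos \<theta> + a2 * sin \<theta>"
    and "b \<equiv> \<lambda>\<theta>. b0 + b1 * cos \<theta> + b2 * sin \<theta>"
    and "c \<equiv> \<lambda>\<theta>. c0 + c1 * cos \<theta> + c2 * sin \<theta>"
  assumes S: "open S" and cond: "\<And>\<theta>. \<theta> \<in> S \<Longrightarrow> s * b \<theta> > 0 \<and> (a \<theta>)^2 + (b \<theta>)^2 - (c \<theta>)^2 > 0"
  shows "real_analytic_on (\<lambda>\<theta>. s * 2 * arctan ((c \<theta> - a \<theta>) / (s * b \<theta> + sqrt ((a \<theta>)^2 + (b \<theta>)^2 - (c \<theta>)^2)))) S"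
  unfolding real_analytic_on_def
proof
  fix x assume xS: "x \<in> S"
  define ac where "ac = (\<lambda>z::complex. of_real a0 + of_real a1 * cos z + of_real a2 * sin z)"
  define bc where "bc = (\<lambda>z::complex. of_real b0 + of_real b1 * cos z + of_real b2 * sin z)"
  define cc where "cc = (\<lambda>z::complex. of_real c0 + of_real c1 * cos z + of_real c2 * sin z)"
  define G where "G = (\<lambda>z. (cc z - ac z) / (of_real s * bc z + csqrt ((ac z)^2 + (bc z)^2 - (cc z)^2)))"
  define F where "F = (\<lambda>z. of_real s * 2 * Arctan (G z))"
  define f where "f = (\<lambda>\<theta>. s * 2 * arctan ((c \<theta> - a \<theta>) / (s * b \<theta> + sqrt ((a \<theta>)^2 + (b \<theta>)^2 - (c \<theta>)^2))))"
  have abc: "ac (of_real y) = of_real (a y)" "bc (of_real y) = of_real (b y)" "cc (of_real y) = of_real (c y)" for y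
    unfolding ac_def bc_def cc_def a_def b_def c_def by (simp_all add: cos_of_real sin_of_real)
  have GY: "G (of_real y) = of_real ((c y - a y) / (s * b y + sqrt ((a y)^2 + (b y)^2 - (c y)^2)))"
    if "y \<in> S" for y
  proof -
    have nn: "(a y)^2 + (b y)^2 - (c y)^2 \<ge> 0" using cond[OF that] by simp
    have e: "(ac (of_real y))^2 + (bc (of_real y))^2 - (cc (of_real y))^2 = of_real ((a y)^2 + (b y)^2 - (c y)^2)"
      unfolding abc by simp
    show ?thesis
      unfolding G_def e csqrt_of_real[OF nn] unfolding abc by simp
  qed
  have FG: "F (of_real y) = of_real (f y)" if "y \<in> S" for y
    unfolding F_def GY[OF that] Arctan_of_real f_def by simp
  have cx: "s * b x > 0" "(a x)^2 + (b x)^2 - (c x)^2 > 0" using cond[OF xS] by auto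
  have trig: "(\<lambda>z. of_real k0 + of_real k1 * cos z + of_real k2 * sin z) analytic_on A"
    for k0 k1 k2 :: real and A :: "complex set"
    by (intro analytic_on_add analytic_on_mult analytic_on_const analytic_on_cos analytic_on_sin analytic_on_ident)
  have ac: "ac analytic_on A" and bc: "bc analytic_on A" and cc: "cc analytic_on A" for A
    using trig unfolding ac_def bc_def cc_def by blast+
  have E: "(\<lambda>z. (ac z)^2 + (bc z)^2 - (cc z)^2) analytic_on A" for A
    by (intro analytic_on_diff analytic_on_add analytic_on_power ac bc cc)
  have Ex: "(ac (of_real x))^2 + (bc (of_real x))^2 - (cc (of_real x))^2 = of_real ((a x)^2 + (b x)^2 - (c x)^2)"
    unfolding abc by simp
  have sq: "(\<lambda>z. csqrt ((ac z)^2 + (bc z)^2 - (cc z)^2)) analytic_on {of_real x}"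
    by (rule analytic_on_csqrt'[OF E]) (use cx in \<open>auto simp: Ex complex_nonpos_Reals_iff\<close>)
  have den: "of_real s * bc (of_real x) + csqrt ((ac (of_real x))^2 + (bc (of_real x))^2 - (cc (of_real x))^2)
      = of_real (s * b x + sqrt ((a x)^2 + (b x)^2 - (c x)^2))"
    unfolding Ex abc using cx by (simp add: csqrt_of_real)
  have denpos: "s * b x + sqrt ((a x)^2 + (b x)^2 - (c x)^2) > 0" using cx by (simp add: add_pos_nonneg)
  have nz: "of_real s * bc (of_real x) + csqrt ((ac (of_real x))^2 + (bc (of_real x))^2 - (cc (of_real x))^2) \<noteq> 0"
    unfolding den using denpos by (metis of_real_eq_0_iff less_irrefl)
  have Gan: "G analytic_on {of_real x}"
    unfolding G_def
    by (intro analytic_on_divide analytic_on_diff analytic_on_add analytic_on_mult analytic_on_const cc ac bc sq)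
       (use nz in auto)
  have "Arctan \<circ> G analytic_on {of_real x}"
  proof (rule analytic_on_compose_gen[OF Gan analytic_Arctan_strip])
    fix z assume "z \<in> {complex_of_real x}"
    then show "G z \<in> {z. \<bar>Im z\<bar> < 1}"
      using GY[OF xS] by simp
  qed
  then have "F analytic_on {of_real x}"
    unfolding F_def by (intro analytic_on_mult analytic_on_const) (simp add: o_def)
  then obtain e where e: "e > 0" "F holomorphic_on ball (of_real x) e"
    unfolding analytic_on_def by auto
  obtain r0 where r0: "r0 > 0" "ball x r0 \<subseteq> S" using S xS openE by blast
  define r where "r = min e r0"
  define co where "co = (\<lambda>n. Re ((deriv ^^ n) F (of_real x) / fact n))"
  show "\<exists>r>0. \<exists>c. \<forall>y. \<bar>y - x\<bar> < r \<longrightarrow> (\<lambda>n. c n * (y - x) ^ n) sums f y"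
    unfolding f_def[symmetric]
  proof (intro exI conjI allI impI)
    show "r > 0" using e r0 by (simp add: r_def)
    fix y assume y: "\<bar>y - x\<bar> < r"
    have yS: "y \<in> S" using y r0 by (auto simp: r_def dist_real_def)
    have "of_real y \<in> ball (of_real x :: complex) e"
      using y by (simp add: r_def dist_norm abs_minus_commute flip: of_real_diff)
    from holomorphic_power_series[OF e(2) this]
    have PS: "(\<lambda>n. (deriv ^^ n) F (of_real x) / fact n * (of_real y - of_real x)^n) sums F (of_real y)" .
    then show "(\<lambda>n. co n * (y - x) ^ n) sums f y"
    proof -
      have eq: "Re (w * of_real r / fact n) = Re (w / fact n) * r" for w :: complex and r n
      proof -
        have f: "(fact n :: complex) = of_real (fact n)" by simp
        have "Re (w * of_real r / fact n) = Re (w * of_real r) / fact n"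
          unfolding f Re_divide_of_real ..
        also have "\<dots> = Re w * r / fact n" by simp
        also have "\<dots> = Re (w / fact n) * r" unfolding f Re_divide_of_real by simp
        finally show ?thesis .
      qed
      show ?thesis using sums_Re[OF PS]
        unfolding co_def FG[OF yS] by (simp add: eq flip: of_real_diff of_real_power)
    qed
  qed
qed


theorem lemmaA1:
  fixes t1 t2 t3 t4 :: "real^3"
  assumes "triple t1 t2 t3 \<noteq> 0" and "triple t2 t3 t4 \<noteq> 0"
    and "triple t3 t4 t1 \<noteq> 0" and "triple t4 t1 t2 \<noteq> 0"
  shows "\<exists>thm thp. thm < 0 \<and> 0 < thp \<and>
    (\<exists>\<gamma>::real \<Rightarrow> real.
       (\<gamma> C1_differentiable_on {thm<..<thp} \<and> \<gamma> 0 = 0 \<and>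
        (\<forall>\<theta>\<in>{thm<..<thp}. f_comp t1 t2 t3 t4 (\<gamma> \<theta>) \<theta> = 0 \<and>
                             (\<forall>i<4. f_mv t1 t2 t3 t4 (\<gamma> \<theta>) \<theta> i > 0)))
     \<and> (\<forall>\<gamma>'::real \<Rightarrow> real.
          (\<gamma>' C1_differentiable_on {thm<..<thp} \<and> \<gamma>' 0 = 0 \<and>
           (\<forall>\<theta>\<in>{thm<..<thp}. f_comp t1 t2 t3 t4 (\<gamma>' \<theta>) \<theta> = 0 \<and>
                                (\<forall>i<4. f_mv t1 t2 t3 t4 (\<gamma>' \<theta>) \<theta> i > 0)))
          \<longrightarrow> (\<forall>\<theta>\<in>{thm<..<thp}. \<gamma>' \<theta> = \<gamma> \<theta>))
     \<and> real_analytic_on \<gamma> {thm<..<thp}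
     \<and> (\<forall>\<theta>\<in>{thm<..<thp}.
          deriv \<gamma> \<theta> = (norm t1 / norm t4) *
            (triple (t2d t1 t2 (\<gamma> \<theta>)) (t3d t4 t3 \<theta>) t4
             / triple t1 (t2d t1 t2 (\<gamma> \<theta>)) (t3d t4 t3 \<theta>))))"
proof -
  define T where "T = triple t1 t2 t3"
  have T0: "T \<noteq> 0" using assms(1) by (simp add: T_def)
  have t1nz: "t1 \<noteq> 0" using assms(1) by (auto simp: triple_def)
  have t4nz: "t4 \<noteq> 0" using assms(2) by (auto simp: triple_def)
  define n1 where "n1 = norm t1"
  define n4 where "n4 = norm t4"
  have n1: "n1 > 0" using t1nz by (simp add: n1_def)
  have n4: "n4 > 0" using t4nz by (simp add: n4_def)
  define P2 where "P2 = ((t1 \<bullet> t2) / n1\<^sup>2) *\<^sub>R t1"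
  define Q2 where "Q2 = t2 - P2"
  define S2 where "S2 = (1 / n1) *\<^sub>R cross3 t1 t2"
  define P3 where "P3 = ((t4 \<bullet> t3) / n4\<^sup>2) *\<^sub>R t4"
  define Q3 where "Q3 = t3 - P3"
  define S3 where "S3 = (1 / n4) *\<^sub>R cross3 t4 t3"
  have t2d_eq: "t2d t1 t2 x = P2 + cos x *\<^sub>R Q2 + sin x *\<^sub>R S2" for x
    unfolding t2d_def rot_decomp P2_def Q2_def S2_def n1_def ..
  have t3d_eq: "t3d t4 t3 x = P3 + cos x *\<^sub>R Q3 + sin x *\<^sub>R S3" for x
    unfolding t3d_def rot_decomp P3_def Q3_def S3_def n4_def ..
  have cr2: "cross3 t1 (t2d t1 t2 x) = n1 *\<^sub>R (cos x *\<^sub>R S2 - sin x *\<^sub>R Q2)" for x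
    unfolding t2d_def cross_rot[OF t1nz] P2_def Q2_def S2_def n1_def ..
  have cr3: "cross3 t4 (t3d t4 t3 x) = n4 *\<^sub>R (cos x *\<^sub>R S3 - sin x *\<^sub>R Q3)" for x
    unfolding t3d_def cross_rot[OF t4nz] P3_def Q3_def S3_def n4_def ..
  define a0 where "a0 = Q2 \<bullet> P3"
  define a1 where "a1 = Q2 \<bullet> Q3"
  define a2 where "a2 = Q2 \<bullet> S3"
  define b0 where "b0 = S2 \<bullet> P3"
  define b1 where "b1 = S2 \<bullet> Q3"
  define b2 where "b2 = S2 \<bullet> S3"
  define c0 where "c0 = t2 \<bullet> t3 - P2 \<bullet> P3"
  define c1 where "c1 = - (P2 \<bullet> Q3)"
  define c2 where "c2 = - (P2 \<bullet> S3)"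
  define A where "A = (\<lambda>\<theta>::real. a0 + a1 * cos \<theta> + a2 * sin \<theta>)"
  define B where "B = (\<lambda>\<theta>::real. b0 + b1 * cos \<theta> + b2 * sin \<theta>)"
  define C where "C = (\<lambda>\<theta>::real. c0 + c1 * cos \<theta> + c2 * sin \<theta>)"
  define A' where "A' = (\<lambda>\<theta>::real. - a1 * sin \<theta> + a2 * cos \<theta>)"
  define B' where "B' = (\<lambda>\<theta>::real. - b1 * sin \<theta> + b2 * cos \<theta>)"
  define C' where "C' = (\<lambda>\<theta>::real. - c1 * sin \<theta> + c2 * cos \<theta>)"
  have F1: "f_comp t1 t2 t3 t4 x \<theta> = A \<theta> * cos x + B \<theta> * sin x - C \<theta>" for x \<theta>
    unfolding f_comp_def t2d_eq t3d_eq A_def B_def C_def a0_def a1_def a2_def b0_def b1_def b2_def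
      c0_def c1_def c2_def
    by (simp add: inner_add_left inner_add_right algebra_simps)
  have F2: "triple t1 (t2d t1 t2 x) (t3d t4 t3 \<theta>) = n1 * (B \<theta> * cos x - A \<theta> * sin x)" for x \<theta>
    unfolding triple_cyc cr2 t3d_eq A_def B_def a0_def a1_def a2_def b0_def b1_def b2_def
    by (simp add: inner_add_left inner_add_right inner_diff_left inner_diff_right algebra_simps)
  have F3: "triple (t2d t1 t2 x) (t3d t4 t3 \<theta>) t4
      = - n4 * (- C' \<theta> + cos x * A' \<theta> + sin x * B' \<theta>)" for x \<theta>
  proof -
    have "triple (t2d t1 t2 x) (t3d t4 t3 \<theta>) t4 = - (t2d t1 t2 x \<bullet> cross3 t4 (t3d t4 t3 \<theta>))"
      unfolding triple_def using cross_skew[of "t3d t4 t3 \<theta>" t4] by simp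
    also have "\<dots> = - n4 * (- C' \<theta> + cos x * A' \<theta> + sin x * B' \<theta>)"
      unfolding cr3 t2d_eq A'_def B'_def C'_def a1_def a2_def b1_def b2_def c1_def c2_def
      by (simp add: inner_add_left inner_add_right inner_diff_left inner_diff_right algebra_simps)
    finally show ?thesis .
  qed
  define s where "s = (if T > 0 then 1 else (-1::real))"
  have s1: "s = 1 \<or> s = -1" by (simp add: s_def)
  define \<gamma> where "\<gamma> = (\<lambda>\<theta>. s * 2 * arctan ((C \<theta> - A \<theta>) / (s * B \<theta> + sqrt ((A \<theta>)^2 + (B \<theta>)^2 - (C \<theta>)^2))))"
  define K where "K = (\<lambda>\<theta>. s * B \<theta> > 0 \<and> (A \<theta>)^2 + (B \<theta>)^2 - (C \<theta>)^2 > 0)"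
  have t2d0: "t2d t1 t2 0 = t2" by (simp add: t2d_def rot_0)
  have t3d0: "t3d t4 t3 0 = t3" by (simp add: t3d_def rot_0)
  have AC0: "A 0 = C 0" using F1[of 0 0] by (simp add: f_comp_def t2d0 t3d0)
  have B0: "T = n1 * B 0" using F2[of 0 0] by (simp add: t2d0 t3d0 T_def)
  have sB0: "s * B 0 > 0" using B0 n1 T0 by (auto simp: s_def field_simps zero_less_mult_iff mult_less_0_iff)
  have K0: "K 0" unfolding K_def using sB0 AC0 by (auto simp: zero_less_mult_iff)
  have g0: "\<gamma> 0 = 0" unfolding \<gamma>_def AC0 by simp
  have solves: "A \<theta> * cos (\<gamma> \<theta>) + B \<theta> * sin (\<gamma> \<theta>) = C \<theta>"
     "s * (B \<theta> * cos (\<gamma> \<theta>) - A \<theta> * sin (\<gamma> \<theta>)) = sqrt ((A \<theta>)^2 + (B \<theta>)^2 - (C \<theta>)^2)"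
    if "K \<theta>" for \<theta>
    using core[OF s1, of "B \<theta>" "A \<theta>" "C \<theta>"] that unfolding K_def \<gamma>_def by auto
  have Dg: "\<exists>d. (\<gamma> has_real_derivative d) (at \<theta>)" if "K \<theta>" for \<theta>
  proof -
    have p: "0 < (A \<theta>)^2 + (B \<theta>)^2 - (C \<theta>)^2" "s * B \<theta> + sqrt ((A \<theta>)^2 + (B \<theta>)^2 - (C \<theta>)^2) \<noteq> 0"
      using that unfolding K_def by (auto simp: add_pos_nonneg intro!: less_imp_neq[symmetric])
    show ?thesis unfolding \<gamma>_def A_def B_def C_def
      using p unfolding A_def B_def C_def by (intro exI) (auto intro!: derivative_eq_intros)
  qed
  have cg: "continuous (at \<theta>) \<gamma>" if "K \<theta>" for \<theta>
    using Dg[OF that] DERIV_isCont by blast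
  have c2d: "continuous (at \<theta>) (\<lambda>\<theta>. t2d t1 t2 (\<gamma> \<theta>))" if "K \<theta>" for \<theta>
    unfolding t2d_eq by (intro continuous_intros cg[OF that])
  have c3d: "continuous (at \<theta>) (\<lambda>\<theta>. t3d t4 t3 \<theta>)" for \<theta>
    unfolding t3d_eq by (intro continuous_intros)
  define M where "M = (\<lambda>\<theta>. [triple t1 (t2d t1 t2 (\<gamma> \<theta>)) (t3d t4 t3 \<theta>) * T,
     triple (t2d t1 t2 (\<gamma> \<theta>)) (t3d t4 t3 \<theta>) t4 * triple t2 t3 t4,
     triple (t3d t4 t3 \<theta>) t4 t1 * triple t3 t4 t1,
     triple t4 t1 (t2d t1 t2 (\<gamma> \<theta>)) * triple t4 t1 t2])"
  have all4: "(\<forall>i<(4::nat). P i) \<longleftrightarrow> P 0 \<and> P 1 \<and> P 2 \<and> P 3" for P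
    by (auto simp: numeral_eq_Suc less_Suc_eq)
  have fmv_iff: "(\<forall>i<4. f_mv t1 t2 t3 t4 x \<theta> i > 0) \<longleftrightarrow>
     triple t1 (t2d t1 t2 x) (t3d t4 t3 \<theta>) * T > 0 \<and>
     triple (t2d t1 t2 x) (t3d t4 t3 \<theta>) t4 * triple t2 t3 t4 > 0 \<and>
     triple (t3d t4 t3 \<theta>) t4 t1 * triple t3 t4 t1 > 0 \<and>
     triple t4 t1 (t2d t1 t2 x) * triple t4 t1 t2 > 0" for x \<theta>
    unfolding all4 by (simp add: f_mv_def Let_def T_def)
  have ev_pos: "eventually (\<lambda>x. f x > 0) (nhds 0)" if "continuous (at (0::real)) f" "f 0 > (0::real)" for f
    using that by (metis order_tendstoD(1) tendsto_at_iff_tendsto_nhds isCont_def)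
  have ev: "eventually (\<lambda>\<theta>. K \<theta> \<and> (\<forall>i<4. f_mv t1 t2 t3 t4 (\<gamma> \<theta>) \<theta> i > 0)) (nhds 0)"
  proof -
    have e1: "eventually (\<lambda>\<theta>. s * B \<theta> > 0) (nhds 0)"
      by (rule ev_pos) (use sB0 in \<open>auto simp: B_def intro!: continuous_intros\<close>)
    have e2: "eventually (\<lambda>\<theta>. (A \<theta>)^2 + (B \<theta>)^2 - (C \<theta>)^2 > 0) (nhds 0)"
      by (rule ev_pos) (use K0 in \<open>auto simp: K_def A_def B_def C_def intro!: continuous_intros\<close>)
    have e3: "eventually (\<lambda>\<theta>. triple t1 (t2d t1 t2 (\<gamma> \<theta>)) (t3d t4 t3 \<theta>) * T > 0) (nhds 0)"
      by (rule ev_pos) (use T0 in \<open>auto simp: triple_def g0 t2d0 t3d0 zero_less_mult_iff T_def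
          intro!: continuous_intros continuous_cross c2d[OF K0] c3d\<close>)
    have e4: "eventually (\<lambda>\<theta>. triple (t2d t1 t2 (\<gamma> \<theta>)) (t3d t4 t3 \<theta>) t4 * triple t2 t3 t4 > 0) (nhds 0)"
      by (rule ev_pos) (use assms(2) in \<open>auto simp: triple_def g0 t2d0 t3d0 zero_less_mult_iff
          intro!: continuous_intros continuous_cross c2d[OF K0] c3d\<close>)
    have e5: "eventually (\<lambda>\<theta>. triple (t3d t4 t3 \<theta>) t4 t1 * triple t3 t4 t1 > 0) (nhds 0)"
      by (rule ev_pos) (use assms(3) in \<open>auto simp: triple_def g0 t2d0 t3d0 zero_less_mult_iff
          intro!: continuous_intros continuous_cross c2d[OF K0] c3d\<close>)
    have e6: "eventually (\<lambda>\<theta>. triple t4 t1 (t2d t1 t2 (\<gamma> \<theta>)) * triple t4 t1 t2 > 0) (nhds 0)"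
      by (rule ev_pos) (use assms(4) in \<open>auto simp: triple_def g0 t2d0 t3d0 zero_less_mult_iff
          intro!: continuous_intros continuous_cross c2d[OF K0] c3d\<close>)
    show ?thesis using e1 e2 e3 e4 e5 e6 unfolding fmv_iff K_def
      by eventually_elim auto
  qed
  then obtain \<delta> where \<delta>: "\<delta> > 0" "\<And>\<theta>. dist \<theta> 0 < \<delta> \<Longrightarrow> K \<theta> \<and> (\<forall>i<4. f_mv t1 t2 t3 t4 (\<gamma> \<theta>) \<theta> i > 0)"
    unfolding eventually_nhds_metric by blast
  define S where "S = {-\<delta><..<\<delta>}"
  have inS: "K \<theta>" "\<forall>i<4. f_mv t1 t2 t3 t4 (\<gamma> \<theta>) \<theta> i > 0" if "\<theta> \<in> S" for \<theta>
    using \<delta>(2)[of \<theta>] that by (auto simp: S_def dist_real_def)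
  have Sopen: "open S" by (simp add: S_def)
  define R where "R = (\<lambda>\<theta>. (n1 / n4) * (triple (t2d t1 t2 (\<gamma> \<theta>)) (t3d t4 t3 \<theta>) t4
             / triple t1 (t2d t1 t2 (\<gamma> \<theta>)) (t3d t4 t3 \<theta>)))"
  have key: "(\<gamma> has_real_derivative R \<theta>) (at \<theta>)" if th: "\<theta> \<in> S" for \<theta>
  proof -
    obtain d where d: "(\<gamma> has_real_derivative d) (at \<theta>)" using Dg[OF inS(1)[OF th]] by blast
    define g where "g = \<gamma> \<theta>"
    have H: "((\<lambda>y. A y * cos (\<gamma> y) + B y * sin (\<gamma> y) - C y) has_real_derivative
        (A' \<theta> * cos g - A \<theta> * sin g * d + B' \<theta> * sin g + B \<theta> * cos g * d - C' \<theta>)) (at \<theta>)"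
      unfolding A_def B_def C_def A'_def B'_def C'_def g_def
      by (auto intro!: derivative_eq_intros d simp: algebra_simps)
    have H0: "((\<lambda>y. A y * cos (\<gamma> y) + B y * sin (\<gamma> y) - C y) has_real_derivative 0) (at \<theta>)"
      by (rule has_field_derivative_transform_within_open[OF DERIV_const Sopen th])
         (use solves(1)[OF inS(1)] in simp)
    have Z: "A' \<theta> * cos g - A \<theta> * sin g * d + B' \<theta> * sin g + B \<theta> * cos g * d - C' \<theta> = 0"
      using DERIV_unique[OF H H0] .
    define E where "E = B \<theta> * cos g - A \<theta> * sin g"
    have "s * E > 0" using solves(2)[OF inS(1)[OF th]] inS(1)[OF th]
      unfolding E_def g_def K_def by simp
    then have E0: "E \<noteq> 0" by auto
    have dE: "d * E = C' \<theta> - A' \<theta> * cos g - B' \<theta> * sin g"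
      using Z unfolding E_def by (simp add: algebra_simps)
    have "R \<theta> = (n1 / n4) * ((- n4 * (- C' \<theta> + cos g * A' \<theta> + sin g * B' \<theta>)) / (n1 * E))"
      unfolding R_def F2 F3 E_def g_def ..
    also have "\<dots> = (C' \<theta> - A' \<theta> * cos g - B' \<theta> * sin g) / E"
      using n1 n4 E0 by (simp add: field_simps)
    also have "\<dots> = d" using dE E0 by (simp add: field_simps)
    finally show ?thesis using d by simp
  qed
  have contg: "continuous_on S \<gamma>"
    using cg inS(1) by (simp add: continuous_at_imp_continuous_on)
  have contR: "continuous_on S R"
  proof -
    have c2: "continuous_on S (\<lambda>\<theta>. t2d t1 t2 (\<gamma> \<theta>))"
      unfolding t2d_eq by (intro continuous_intros contg)
    have c3: "continuous_on S (\<lambda>\<theta>. t3d t4 t3 \<theta>)"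
      unfolding t3d_eq by (intro continuous_intros)
    have nz: "triple t1 (t2d t1 t2 (\<gamma> \<theta>)) (t3d t4 t3 \<theta>) \<noteq> 0" if "\<theta> \<in> S" for \<theta>
      using inS(2)[OF that] unfolding fmv_iff by auto
    show ?thesis unfolding R_def triple_def
      by (intro continuous_intros continuous_on_cross c2 c3)
         (use nz in \<open>auto simp: triple_def\<close>)
  qed
  have C1: "\<gamma> C1_differentiable_on S"
    unfolding C1_differentiable_on_def
    using key contR by (auto simp: has_real_derivative_iff_has_vector_derivative)
  have fc: "f_comp t1 t2 t3 t4 (\<gamma> \<theta>) \<theta> = 0" if "\<theta> \<in> S" for \<theta>
    unfolding F1 using solves(1)[OF inS(1)[OF that]] by simp
  have uniq: "\<forall>\<theta>\<in>S. \<gamma>' \<theta> = \<gamma> \<theta>"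
    if h: "\<gamma>' C1_differentiable_on S \<and> \<gamma>' 0 = 0 \<and>
           (\<forall>\<theta>\<in>S. f_comp t1 t2 t3 t4 (\<gamma>' \<theta>) \<theta> = 0 \<and> (\<forall>i<4. f_mv t1 t2 t3 t4 (\<gamma>' \<theta>) \<theta> i > 0))"
    for \<gamma>'
  proof -
    have mult: "\<exists>n::int. \<gamma>' \<theta> - \<gamma> \<theta> = 2 * pi * n" if th: "\<theta> \<in> S" for \<theta>
    proof -
      define x where "x = \<gamma>' \<theta>"
      have x1: "A \<theta> * cos x + B \<theta> * sin x = C \<theta>" using h th F1 unfolding x_def by auto
      have "triple t1 (t2d t1 t2 x) (t3d t4 t3 \<theta>) * T > 0" using h th unfolding fmv_iff x_def by auto
      then have "n1 * (B \<theta> * cos x - A \<theta> * sin x) * T > 0" unfolding F2 .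
      then have x2: "s * (B \<theta> * cos x - A \<theta> * sin x) > 0"
        using n1 T0 by (auto simp: s_def zero_less_mult_iff mult_less_0_iff)
      have y2: "s * (B \<theta> * cos (\<gamma> \<theta>) - A \<theta> * sin (\<gamma> \<theta>)) > 0"
        using solves(2)[OF inS(1)[OF th]] inS(1)[OF th] unfolding K_def by simp
      have "0 < (A \<theta>)^2 + (B \<theta>)^2 - (C \<theta>)^2" using inS(1)[OF th] unfolding K_def by simp
      from core_unique[OF s1 this x1 x2 solves(1)[OF inS(1)[OF th]] y2]
      show ?thesis unfolding x_def by (auto simp: algebra_simps)
    qed
    have cont': "continuous_on S (\<lambda>\<theta>. \<gamma>' \<theta> - \<gamma> \<theta>)"
      using h C1_differentiable_imp_continuous_on contg by (intro continuous_intros) auto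
    have "(\<lambda>\<theta>. \<gamma>' \<theta> - \<gamma> \<theta>) constant_on S"
    proof (rule continuous_discrete_range_constant[OF _ cont'])
      show "connected S" by (simp add: S_def)
      fix x assume xS: "x \<in> S"
      show "\<exists>e>0. \<forall>y. y \<in> S \<and> \<gamma>' y - \<gamma> y \<noteq> \<gamma>' x - \<gamma> x \<longrightarrow> e \<le> norm ((\<gamma>' y - \<gamma> y) - (\<gamma>' x - \<gamma> x))"
      proof (intro exI conjI allI impI)
        show "2 * pi > 0" by simp
        fix y assume y: "y \<in> S \<and> \<gamma>' y - \<gamma> y \<noteq> \<gamma>' x - \<gamma> x"
        obtain n :: int where n: "\<gamma>' y - \<gamma> y = 2 * pi * n" using mult y by blast
        obtain m :: int where m: "\<gamma>' x - \<gamma> x = 2 * pi * m" using mult xS by blast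
        have nm: "n \<noteq> m" using y n m by auto
        then have "1 \<le> \<bar>real_of_int n - real_of_int m\<bar>"
          by (metis of_int_1_le_iff of_int_abs of_int_diff zero_less_abs_iff right_minus_eq int_one_le_iff_zero_less)
        then have "2 * pi * 1 \<le> 2 * pi * \<bar>real_of_int n - real_of_int m\<bar>"
          by (intro mult_left_mono) auto
        also have "\<dots> = norm ((\<gamma>' y - \<gamma> y) - (\<gamma>' x - \<gamma> x))"
          unfolding n m by (simp add: abs_mult right_diff_distrib[symmetric])
        finally show "2 * pi \<le> norm ((\<gamma>' y - \<gamma> y) - (\<gamma>' x - \<gamma> x))" by simp
      qed
    qed
    then obtain k where k: "\<And>\<theta>. \<theta> \<in> S \<Longrightarrow> \<gamma>' \<theta> - \<gamma> \<theta> = k" unfolding constant_on_def by blast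
    have "0 \<in> S" using \<delta>(1) by (simp add: S_def)
    then have "k = 0" using k[of 0] h g0 by simp
    then show ?thesis using k by simp
  qed
  have ana: "real_analytic_on \<gamma> S"
    unfolding \<gamma>_def A_def B_def C_def
    by (rule analytic_gamma[OF Sopen]) (use inS(1) in \<open>auto simp: K_def A_def B_def C_def\<close>)
  have der: "deriv \<gamma> \<theta> = R \<theta>" if "\<theta> \<in> S" for \<theta>
    using key[OF that] by (rule DERIV_imp_deriv)
  show ?thesis
    apply (rule exI[of _ "-\<delta>"], rule exI[of _ \<delta>])
    using \<delta>(1) C1 g0 fc inS(2) uniq ana der
    unfolding S_def R_def n1_def n4_def
    by (intro conjI exI[of _ \<gamma>]) auto
qed

end
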